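(* Let $n\ge 2$ and let $p(x)=x^{2n+1}-m_{2n}x^{2n}+m_{2n-1}x^{2n-1}+\cdots+m_1x-1$ with $m_j\in\mathbb Z$, and let $x_0,\dots,x_{2n}\in\mathbb C$ be the roots of $p$. If $x_0\in\mathbb R$ is a simple root and $|x_1|=\cdots=|x_{2n}|$, then $x_0=1$ and $|x_j|=1$ for $j=1,\dots,2n$. *)

theory Defs
  imports "HOL-Analysis.Analysis" "HOL-Computational_Algebra.Polynomial"
begin

end

theory Submission
  imports Defs "Berlekamp_Zassenhaus.Factor_Bound"
begin
hide_const (open) up_ring.coeff module.smult Coset.order up_ring.monom

lemma const_norm:
  fixes H :: "complex poly"
  assumes lc: "norm (lead_coeff H) = 1" and rt: "\<And>y. poly H y = 0 \<Longrightarrow> norm y = r"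
  shows "norm (poly H 0) = r ^ degree H"
proof -
  obtain root where eq: "smult (lead_coeff H) (\<Prod>i<degree H. [:-root i, 1:]) = H"
    by (rule complex_poly_decompose')
  have r: "norm (root i) = r" if "i < degree H" for i
  proof (rule rt)
    have "poly H (root i) = lead_coeff H * (\<Prod>k<degree H. root i - root k)"
      by (subst eq[symmetric]) (simp add: poly_prod)
    also have "(\<Prod>k<degree H. root i - root k) = 0"
      using that by (auto simp: prod_zero_iff)
    finally show "poly H (root i) = 0" by simp
  qed
  have "poly H 0 = lead_coeff H * (\<Prod>k<degree H. - root k)"
    by (subst eq[symmetric]) (simp add: poly_prod)
  hence "norm (poly H 0) = (\<Prod>k<degree H. norm (root k))"
    using lc by (simp add: norm_mult prod_norm[symmetric])
  also have "\<dots> = (\<Prod>k<degree H. r)" using r by (intro prod.cong) auto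
  finally show ?thesis by simp
qed

interpretation ratc: map_poly_comm_semiring_hom "of_rat :: rat \<Rightarrow> complex" by unfold_locales

lemma map_rat_int: "map_poly (of_rat :: rat \<Rightarrow> complex) (map_poly rat_of_int p) = map_poly of_int p"
  by (simp add: map_poly_map_poly o_def of_rat_of_int_eq)

lemma transport:
  fixes p G :: "int poly" and z :: complex
  assumes p0: "p \<noteq> 0" and Gz: "poly (of_int_poly G) z = 0" and pz: "poly (of_int_poly p) z = 0"
    and nosplit: "\<And>f h. p = f * h \<Longrightarrow> degree f = 0 \<or> degree h = 0"
  shows "map_poly rat_of_int p dvd map_poly rat_of_int G"
proof -
  define pQ where "pQ = map_poly rat_of_int p"
  define GQ where "GQ = map_poly rat_of_int G"
  define f where "f = gcd pQ GQ"
  have pQ0: "pQ \<noteq> 0" using p0 by (simp add: pQ_def)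
  have bez: "fst (bezout_coefficients pQ GQ) * pQ + snd (bezout_coefficients pQ GQ) * GQ = f"
    unfolding f_def by (rule bezout_coefficients_fst_snd)
  have "poly (map_poly (of_rat :: rat \<Rightarrow> complex) f) z = 0"
    unfolding bez[symmetric]
    by (simp add: ratc.hom_add ratc.hom_mult pQ_def GQ_def map_rat_int pz Gz)
  moreover have f0: "f \<noteq> 0" using pQ0 by (simp add: f_def)
  ultimately have degf: "degree f \<noteq> 0"
  proof (intro notI)
    assume fz: "poly (map_poly (of_rat :: rat \<Rightarrow> complex) f) z = 0" and "degree f = 0"
    then obtain c where "f = [:c:]" by (metis degree_eq_zeroE)
    with f0 fz show False by simp
  qed
  obtain h where pfh: "pQ = f * h" unfolding f_def by (meson dvd_def gcd_dvd1)
  from rat_to_int_factor[OF pfh[unfolded pQ_def]] obtain g' h' where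
    "p = g' * h'" "degree g' = degree f" "degree h' = degree h" by blast
  hence dh: "degree h = 0" using nosplit[of g' h'] degf by simp
  have h0: "h \<noteq> 0" using pfh pQ0 by auto
  from dh obtain c where hc: "h = [:c:]" by (metis degree_eq_zeroE)
  with h0 have c0: "c \<noteq> 0" by auto
  have "f = pQ * [:inverse c:]" using pfh hc c0 by (simp add: smult_smult)
  hence "pQ dvd f" by (metis dvd_triv_left)
  also have "f dvd GQ" unfolding f_def by simp
  finally show ?thesis unfolding pQ_def GQ_def .
qed

lemma transport_conseq:
  fixes p G :: "int poly"
  assumes "map_poly rat_of_int p dvd map_poly rat_of_int G"
  shows "poly (of_int_poly p) w = (0::complex) \<Longrightarrow> poly (of_int_poly G) w = 0"
    and "G \<noteq> 0 \<Longrightarrow> degree p \<le> degree G"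
proof -
  obtain k where k: "map_poly rat_of_int G = map_poly rat_of_int p * k" using assms by (auto elim: dvdE)
  hence "map_poly (of_rat :: rat \<Rightarrow> complex) (map_poly rat_of_int G) = map_poly of_rat (map_poly rat_of_int p * k)" by simp
  hence eq: "of_int_poly G = (of_int_poly p :: complex poly) * map_poly of_rat k"
    by (simp add: ratc.hom_mult map_rat_int)
  show "poly (of_int_poly p) w = (0::complex) \<Longrightarrow> poly (of_int_poly G) w = 0"
    by (simp add: eq)
  assume "G \<noteq> 0"
  hence "map_poly rat_of_int G \<noteq> 0" by simp
  from dvd_imp_degree_le[OF assms this] show "degree p \<le> degree G" by simp
qed

interpretation cnjh: map_poly_comm_semiring_hom "cnj" by unfold_locales simp_all

lemma real_pow_eq_1: "0 \<le> (r::real) \<Longrightarrow> r ^ m = 1 \<Longrightarrow> m \<noteq> 0 \<Longrightarrow> r = 1"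
  using power_eq_1_iff[of r m] by auto

lemma int_mult_1_abs: "(a::int) * b = 1 \<Longrightarrow> \<bar>a\<bar> = 1"
  using abs_zmult_eq_1[of a b] by simp

lemma modulus_arith:
  fixes r s :: real and N k :: nat
  assumes r: "r > 0" and s: "s \<ge> 0" and h1: "s ^ N * r ^ 2 = 1" and h2: "s * r ^ k = 1" and nk: "N * k \<noteq> 2"
  shows "r = 1"
proof -
  have "(s * r ^ k) ^ N = 1" using h2 by simp
  hence e: "s ^ N * r ^ (k * N) = 1" by (simp add: power_mult_distrib power_mult)
  have sN: "s ^ N \<noteq> 0" using h1 by (metis mult_zero_left zero_neq_one)
  have "s ^ N * r ^ (k * N) = s ^ N * r ^ 2" using e h1 by simp
  hence eq: "r ^ (k * N) = r ^ 2" using sN by (metis mult_left_cancel)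
  show ?thesis
  proof (cases "k * N > 2")
    case True
    have "r ^ (k * N) = r ^ 2 * r ^ (k * N - 2)" using True by (metis less_imp_le_nat le_add_diff_inverse power_add)
    hence "r ^ (k * N - 2) = 1" using eq r by simp
    thus ?thesis using True r by (intro real_pow_eq_1[of r "k*N - 2"]) auto
  next
    case False
    hence lt: "k * N < 2" using nk by (auto simp: mult.commute)
    have "r ^ 2 = r ^ (k * N) * r ^ (2 - k * N)" using lt by (metis less_imp_le_nat le_add_diff_inverse power_add)
    hence "r ^ (2 - k * N) = 1" using eq r by simp
    thus ?thesis using lt r by (intro real_pow_eq_1[of r "2 - k*N"]) auto
  qed
qed



theorem lemma3p5:
  fixes n :: nat and p :: "int poly" and x :: "nat \<Rightarrow> complex"
  assumes n2: "n \<ge> 2"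
    and deg: "degree p = 2 * n + 1"
    and monic: "lead_coeff p = 1"
    and const: "coeff p 0 = -1"
    and roots: "map_poly of_int p = (\<Prod>j\<le>2 * n. [:- x j, 1:])"
    and real_root: "x 0 \<in> \<real>"
    and simple: "order (x 0) (map_poly of_int p) = 1"
    and eqmod: "\<forall>j\<in>{1..2 * n}. norm (x j) = norm (x 1)"
  shows "x 0 = 1 \<and> (\<forall>j\<in>{1..2 * n}. norm (x j) = 1)"
proof -
  define N where "N = 2 * n"
  define P where "P = (map_poly of_int p :: complex poly)"
  define r where "r = norm (x 1)"
  have N4: "N \<ge> 4" using n2 by (simp add: N_def)
  have P_eq: "P = (\<Prod>j\<le>N. [:- x j, 1:])" using roots by (simp add: P_def N_def)
  have Pprod: "poly P y = (\<Prod>j\<le>N. y - x j)" for y by (simp add: P_eq poly_prod)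
  have rootP: "poly P y = 0 \<longleftrightarrow> (\<exists>j\<le>N. y = x j)" for y by (auto simp: Pprod)
  have normx: "norm (x j) = r" if "j \<in> {1..N}" for j using eqmod that unfolding r_def N_def by blast
  have splitN: "{..N} = insert 0 {1..N}" by auto
  define pi where "pi = (\<Prod>k\<in>{1..N}. x k)"
  have coeffP: "coeff P m = of_int (coeff p m)" for m by (simp add: P_def coeff_map_poly)
  have degP: "degree P = N + 1" using deg by (simp add: P_def N_def)
  have P0: "poly P 0 = -1" by (simp add: poly_0_coeff_0 coeffP const)
  have "poly P 0 = (\<Prod>j\<le>N. (-1) * x j)" by (simp add: Pprod)
  also have "\<dots> = (-1) ^ (N + 1) * (\<Prod>j\<le>N. x j)" by (simp only: prod.distrib) simp
  also have "\<dots> = - (\<Prod>j\<le>N. x j)" by (simp add: N_def)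
  finally have prodall: "(\<Prod>j\<le>N. x j) = 1" using P0 by simp
  have x0pi: "x 0 * pi = 1" using prodall by (simp add: splitN pi_def)
  have normpi: "norm pi = r ^ N"
  proof -
    have "norm pi = (\<Prod>k\<in>{1..N}. norm (x k))" by (simp add: pi_def prod_norm)
    also have "\<dots> = (\<Prod>k\<in>{1..N}. r)" using normx by (intro prod.cong) auto
    finally show ?thesis by simp
  qed
  have norm0: "norm (x 0) * r ^ N = 1" using x0pi normpi by (metis norm_mult norm_one)
  have rpos: "r > 0"
  proof -
    have "r \<ge> 0" by (simp add: r_def)
    moreover have "r \<noteq> 0" using norm0 N4 by (auto simp: power_0_left)
    ultimately show ?thesis by simp
  qed
  have x00: "x 0 \<noteq> 0" using x0pi by auto
  define Qc where "Qc = (\<Prod>k\<in>{1..N}. [:- x k, 1:])"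
  have PQ: "P = [:- x 0, 1:] * Qc" by (simp add: P_eq splitN Qc_def)
  have polyQc: "poly Qc y = (\<Prod>k\<in>{1..N}. y - x k)" for y by (simp add: Qc_def poly_prod)
  have Qc0: "Qc \<noteq> 0" by (simp add: Qc_def)
  have cx0: "cnj (x 0) = x 0" using real_root by (simp add: Reals_cnj_iff)
  have lin_cancel: "A = B" if "[:- z, 1:] * A = [:- z, 1:] * B" for z and A B :: "complex poly"
  proof -
    have nz: "[:- z, 1:] \<noteq> (0::complex poly)" by simp
    show ?thesis using that mult_left_cancel[OF nz] by blast
  qed
  have polylin: "poly ([:- z, 1:] * A) w = (w - z) * poly A w" for z w and A :: "complex poly"
    by (simp add: algebra_simps)
  have linnz: "[:- z, 1:] * A \<noteq> 0" if "A \<noteq> 0" for z and A :: "complex poly"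
    using that by (metis mult_eq_0_iff pCons_eq_0_iff one_neq_zero)
  have Qc_cnj: "map_poly cnj Qc = Qc"
  proof -
    have "map_poly cnj P = P" by (simp add: P_def map_poly_map_poly o_def)
    moreover have "map_poly cnj P = map_poly cnj [:- x 0, 1:] * map_poly cnj Qc"
      by (simp only: PQ cnjh.hom_mult)
    moreover have "map_poly cnj [:- x 0, 1:] = [:- x 0, 1:]" by (simp add: cx0)
    ultimately have "[:- x 0, 1:] * map_poly cnj Qc = [:- x 0, 1:] * Qc"
      by (simp only: PQ)
    thus ?thesis by (rule lin_cancel)
  qed
  have Qc_conj: "poly Qc y = cnj (poly Qc (cnj y))" for y
    by (metis poly_map_poly_cnj Qc_cnj)
  define lam where "lam = complex_of_real (r ^ 2)"
  have xcnj: "x k * cnj (x k) = lam" if "k \<in> {1..N}" for k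
    using normx[OF that] by (simp add: lam_def complex_norm_square[symmetric])
  have recip: "y ^ N * poly Qc (lam / y) = pi * poly Qc y" if y0: "y \<noteq> 0" for y
  proof -
    have "y ^ N * poly Qc (lam / y) = (\<Prod>k\<in>{1..N}. y * (lam / y - x k))"
      by (simp add: polyQc prod.distrib)
    also have "\<dots> = (\<Prod>k\<in>{1..N}. x k * ((-1) * (y - cnj (x k))))"
      using xcnj y0 by (intro prod.cong) (auto simp: algebra_simps)
    also have "\<dots> = pi * (-1) ^ N * (\<Prod>k\<in>{1..N}. y - cnj (x k))"
      by (simp only: prod.distrib) (simp add: pi_def)
    also have "(-1::complex) ^ N = 1" by (simp add: N_def)
    also have "(\<Prod>k\<in>{1..N}. y - cnj (x k)) = cnj (poly Qc (cnj y))"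
      by (simp add: polyQc)
    also have "\<dots> = poly Qc y" by (rule Qc_conj[symmetric])
    finally show ?thesis by simp
  qed
  have ord_not: "poly Qc (x 0) \<noteq> 0"
  proof
    assume "poly Qc (x 0) = 0"
    hence "order (x 0) Qc \<noteq> 0" using Qc0 by (simp add: order_root)
    moreover have "order (x 0) [:- x 0, 1:] = 1" using order_power_n_n[of "x 0" 1] by simp
    moreover have "order (x 0) P = order (x 0) [:- x 0, 1:] + order (x 0) Qc"
      unfolding PQ using Qc0 by (intro order_mult linnz)
    ultimately show False using simple by (simp add: P_def)
  qed
  show ?thesis
  proof (cases "r = 1")
    case True
    have n0: "norm (x 0) = 1" using norm0 True by simp
    from real_root obtain t where t: "x 0 = of_real t" by (auto elim: Reals_cases)
    have "\<bar>t\<bar> = 1" using n0 t by simp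
    hence "x 0 = 1 \<or> x 0 = -1" using t by (auto simp: abs_if split: if_splits)
    moreover have "x 0 \<noteq> -1"
    proof
      assume m1: "x 0 = -1"
      hence pim: "pi = -1" using x0pi by (simp add: minus_equation_iff)
      have "lam = 1" using True by (simp add: lam_def)
      hence "(-1) ^ N * poly Qc (-1) = - poly Qc (-1)" using recip[of "-1"] pim by simp
      hence "poly Qc (-1) = - poly Qc (-1)" by (simp add: N_def)
      hence "poly Qc (x 0) = 0" using m1 by simp
      with ord_not show False by simp
    qed
    ultimately have "x 0 = 1" by simp
    moreover have "\<forall>j\<in>{1..2 * n}. norm (x j) = 1" using normx True by (simp add: N_def)
    ultimately show ?thesis by simp
  next
    case rne: False
    have p0: "p \<noteq> 0" using monic by auto
    have P0ne: "P \<noteq> 0" unfolding PQ using Qc0 by (rule linnz)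
    have key: False if gp: "g dvd p" and dg: "degree g \<noteq> 0" and lg: "\<bar>lead_coeff g\<bar> = 1"
      and cg: "\<bar>coeff g 0\<bar> = 1" and og: "poly (of_int_poly g :: complex poly) (x 0) \<noteq> 0" for g
    proof -
      define H where "H = (of_int_poly g :: complex poly)"
      from gp obtain k where pk: "p = g * k" by (auto elim: dvdE)
      have PH: "P = H * of_int_poly k" by (simp add: P_def H_def pk hom_distribs)
      have rt: "norm y = r" if "poly H y = 0" for y
      proof -
        have "poly P y = 0" using that by (simp add: PH)
        then obtain j where j: "j \<le> N" "y = x j" using rootP by auto
        have "j \<noteq> 0"
        proof
          assume j0: "j = 0"
          show False using j that og unfolding j0 H_def by simp
        qed
        thus ?thesis using j normx by auto
      qed
      have lH: "norm (lead_coeff H) = 1" using lg by (simp add: H_def)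
      have "norm (poly H 0) = r ^ degree H" by (rule const_norm[OF lH rt])
      moreover have "norm (poly H 0) = 1" using cg by (simp add: H_def poly_0_coeff_0 coeff_map_poly)
      moreover have "degree H = degree g" by (simp add: H_def)
      ultimately have "r ^ degree g = 1" by simp
      hence "r = 1" using dg rpos by (intro real_pow_eq_1[of r "degree g"]) auto
      with rne show False by simp
    qed
    have nosplit: "degree f = 0 \<or> degree h = 0" if fh: "p = f * h" for f h
    proof (rule ccontr)
      assume "\<not> (degree f = 0 \<or> degree h = 0)"
      hence df: "degree f \<noteq> 0" and dh: "degree h \<noteq> 0" by auto
      have "lead_coeff f * lead_coeff h = 1" using monic fh by (simp add: lead_coeff_mult)
      hence lf: "\<bar>lead_coeff f\<bar> = 1" and lh: "\<bar>lead_coeff h\<bar> = 1"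
        using int_mult_1_abs[of "lead_coeff f" "lead_coeff h"] int_mult_1_abs[of "lead_coeff h" "lead_coeff f"]
        by (auto simp: mult.commute)
      have "coeff f 0 * coeff h 0 = -1" using const fh by (simp add: coeff_mult_0)
      hence "(- coeff f 0) * coeff h 0 = 1" by simp
      hence cf: "\<bar>coeff f 0\<bar> = 1" and ch: "\<bar>coeff h 0\<bar> = 1"
        using int_mult_1_abs[of "- coeff f 0" "coeff h 0"] int_mult_1_abs[of "coeff h 0" "- coeff f 0"]
        by (auto simp: mult.commute)
      have PFH: "P = of_int_poly f * of_int_poly h" by (simp add: P_def fh hom_distribs)
      have "order (x 0) P = order (x 0) (of_int_poly f :: complex poly) + order (x 0) (of_int_poly h :: complex poly)"
        unfolding PFH using P0ne PFH by (intro order_mult) simp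
      hence "order (x 0) (of_int_poly f :: complex poly) = 0 \<or> order (x 0) (of_int_poly h :: complex poly) = 0"
        using simple by (simp add: P_def) linarith
      moreover have "of_int_poly f \<noteq> (0 :: complex poly)" "of_int_poly h \<noteq> (0 :: complex poly)"
        using P0ne PFH by auto
      ultimately have "poly (of_int_poly f :: complex poly) (x 0) \<noteq> 0 \<or> poly (of_int_poly h :: complex poly) (x 0) \<noteq> 0"
        by (auto simp: order_root)
      thus False
      proof
        assume "poly (of_int_poly f :: complex poly) (x 0) \<noteq> 0"
        thus False using key[of f] fh df lf cf by auto
      next
        assume "poly (of_int_poly h :: complex poly) (x 0) \<noteq> 0"
        thus False using key[of h] fh dh lh ch by auto
      qed
    qed
    have trans: "poly (of_int_poly G) w = 0 \<and> (G \<noteq> 0 \<longrightarrow> N + 1 \<le> degree G)"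
      if "poly P z = 0" "poly (of_int_poly G) z = 0" "poly P w = 0" for G z w
    proof -
      have "map_poly rat_of_int p dvd map_poly rat_of_int G"
        by (rule transport[OF p0 that(2)]) (use that(1) nosplit in \<open>auto simp: P_def\<close>)
      from transport_conseq[OF this] that(3) show ?thesis by (auto simp: P_def deg N_def)
    qed
    have lc: "coeff p (N + 1) = 1" using monic deg by (simp add: N_def)
    define a where "a = (\<lambda>k. (of_int (coeff p k) :: complex))"
    define qz where "qz i = (\<Sum>k\<in>{Suc i..N+1}. monom (coeff p k) (k - Suc i))" for i
    define C where "C z i = (\<Sum>k\<in>{Suc i..N+1}. a k * z ^ (k - Suc i))" for z i
    have polyqz: "poly (of_int_poly (qz i)) z = C z i" for i z
      by (simp add: qz_def C_def a_def hom_distribs poly_sum poly_monom map_poly_monom)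
    have coeffqz: "coeff (qz i) m = (if Suc i + m \<le> N + 1 then coeff p (Suc i + m) else 0)" for i m
    proof -
      have "coeff (qz i) m = (\<Sum>k\<in>{Suc i..N+1}. if k = Suc i + m then coeff p k else 0)"
        unfolding qz_def coeff_sum coeff_monom by (intro sum.cong refl) auto
      also have "\<dots> = (if Suc i + m \<le> N + 1 then coeff p (Suc i + m) else 0)"
        by (simp add: sum.delta)
      finally show ?thesis .
    qed
    have degq: "degree (qz i) \<le> N" for i
      by (rule degree_le) (auto simp: coeffqz)
    have qn1: "qz (Suc n) \<noteq> 0"
    proof
      assume "qz (Suc n) = 0"
      hence "coeff (qz (Suc n)) (N - Suc n) = 0" by simp
      moreover have "Suc (Suc n) + (N - Suc n) = N + 1" using N4 by (simp add: N_def)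
      ultimately show False using coeffqz[of "Suc n" "N - Suc n"] lc by simp
    qed
    have C_rec: "C z i = a (Suc i) + z * C z (Suc i)" for z i
    proof (cases "Suc i \<le> N + 1")
      case True
      have "{Suc i..N+1} = insert (Suc i) {Suc (Suc i)..N+1}" using True by auto
      hence "C z i = a (Suc i) + (\<Sum>k\<in>{Suc (Suc i)..N+1}. a k * z ^ (k - Suc i))"
        by (simp add: C_def)
      also have "(\<Sum>k\<in>{Suc (Suc i)..N+1}. a k * z ^ (k - Suc i)) = z * C z (Suc i)"
        unfolding C_def sum_distrib_left
      proof (intro sum.cong refl)
        fix k assume "k \<in> {Suc (Suc i)..N+1}"
        hence "k - Suc i = Suc (k - Suc (Suc i))" by auto
        thus "a k * z ^ (k - Suc i) = z * (a k * z ^ (k - Suc (Suc i)))" by simp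
      qed
      finally show ?thesis .
    next
      case False
      hence "a (Suc i) = 0" using deg by (simp add: a_def coeff_eq_0 N_def)
      thus ?thesis using False by (simp add: C_def)
    qed
    have C_zero: "C z i = 0" if "i > N" for z i using that by (simp add: C_def)
    have C_top: "C z N = 1" for z using lc by (simp add: C_def a_def)
    have C0: "z * C z 0 = poly P z + 1" for z
    proof -
      have split1: "{..N+1} = insert 0 {Suc 0..N+1}" by auto
      have "poly P z = (\<Sum>k\<le>N+1. a k * z ^ k)" by (simp add: poly_altdef degP coeffP a_def)
      also have "\<dots> = a 0 + (\<Sum>k\<in>{Suc 0..N+1}. a k * z ^ k)" using split1 by simp
      also have "(\<Sum>k\<in>{Suc 0..N+1}. a k * z ^ k) = z * C z 0"
        unfolding C_def sum_distrib_left
      proof (intro sum.cong refl)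
        fix k assume "k \<in> {Suc 0..N+1}"
        hence "k = Suc (k - Suc 0)" by auto
        then show "a k * z ^ k = z * (a k * z ^ (k - Suc 0))" by (metis power_Suc mult.left_commute)
      qed
      finally show ?thesis by (simp add: a_def const)
    qed
    define QQ where "QQ z = (\<Sum>i\<le>N. monom (C z i) i)" for z
    have polyQQ: "poly (QQ z) w = (\<Sum>i\<le>N. C z i * w ^ i)" for z w
      by (simp add: QQ_def poly_sum poly_monom)
    have coeffQQ: "coeff (QQ z) i = C z i" for z i
      by (cases "i \<le> N") (auto simp: QQ_def coeff_sum coeff_monom sum.delta C_zero)
    have factor: "P = [:- z, 1:] * QQ z" if Pz: "poly P z = 0" for z
    proof (rule poly_eqI)
      fix m
      show "coeff P m = coeff ([:- z, 1:] * QQ z) m"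
      proof (cases m)
        case 0
        then show ?thesis using C0[of z] Pz by (simp add: coeffP const coeffQQ)
      next
        case (Suc m')
        then show ?thesis using C_rec[of z m'] by (simp add: coeffP coeffQQ a_def algebra_simps)
      qed
    qed
    have Px0: "poly P (x 0) = 0" using rootP by auto
    have Px1: "poly P (x 1) = 0" unfolding rootP using N4 by (intro exI[of _ 1]) auto
    have QQx0: "QQ (x 0) = Qc" using factor[OF Px0] PQ lin_cancel[of "x 0" "QQ (x 0)" Qc] by argo
    define c where "c = C (x 0)"
    have polyQc2: "poly Qc w = (\<Sum>i\<le>N. c i * w ^ i)" for w using polyQQ[of "x 0" w] QQx0 by (simp add: c_def)
    have coeffQc: "coeff Qc i = c i" for i using coeffQQ[of "x 0" i] QQx0 by (simp add: c_def)
    define A where "A = (\<Sum>i\<le>N. monom (c i * lam ^ i) (N - i))"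
    have polyA: "poly A y = y ^ N * poly Qc (lam / y)" if y0: "y \<noteq> 0" for y
    proof -
      have "poly A y = (\<Sum>i\<le>N. c i * lam ^ i * y ^ (N - i))" by (simp add: A_def poly_sum poly_monom)
      also have "\<dots> = (\<Sum>i\<le>N. y ^ N * (c i * (lam / y) ^ i))"
      proof (intro sum.cong refl)
        fix i assume "i \<in> {..N}"
        hence "y ^ N = y ^ (N - i) * y ^ i" by (simp flip: power_add)
        thus "c i * lam ^ i * y ^ (N - i) = y ^ N * (c i * (lam / y) ^ i)"
          using y0 by (simp add: power_divide field_simps)
      qed
      also have "\<dots> = y ^ N * poly Qc (lam / y)" by (simp add: polyQc2 sum_distrib_left)
      finally show ?thesis .
    qed
    have AB: "A = smult pi Qc"
    proof (rule ccontr)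
      assume "A \<noteq> smult pi Qc"
      hence fin: "finite {y. poly (A - smult pi Qc) y = 0}" by (intro poly_roots_finite) simp
      have sub: "UNIV - {0} \<subseteq> {y. poly (A - smult pi Qc) y = 0}" using polyA recip by auto
      have "infinite (UNIV - {0::complex})" by (intro infinite_remove infinite_UNIV_char_0)
      with fin sub show False using finite_subset by blast
    qed
    have recipc: "c i * lam ^ i = pi * c (N - i)" if iN: "i \<le> N" for i
    proof -
      have "coeff A (N - i) = (\<Sum>j\<le>N. if j = i then c j * lam ^ j else 0)"
        unfolding A_def coeff_sum coeff_monom using iN by (intro sum.cong refl) auto
      also have "\<dots> = c i * lam ^ i" using iN by (simp add: sum.delta)
      finally have "coeff A (N - i) = c i * lam ^ i" .
      thus ?thesis by (simp add: AB coeffQc)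
    qed
    have c0: "c 0 = pi"
    proof -
      have "c 0 = poly Qc 0" by (simp add: poly_0_coeff_0 coeffQc)
      also have "\<dots> = (\<Prod>k\<in>{1..N}. (-1) * x k)" by (simp add: polyQc)
      also have "\<dots> = (-1) ^ N * pi" by (simp only: prod.distrib) (simp add: pi_def)
      finally show ?thesis by (simp add: N_def)
    qed
    have pir: "pi \<in> \<real>"
    proof -
      have "pi = inverse (x 0)" using x0pi by (simp add: inverse_unique)
      thus ?thesis using real_root by simp
    qed
    obtain e :: int where e: "e = 1 \<or> e = -1" and pie: "pi = of_int e * lam ^ n"
    proof -
      from pir obtain t where t: "pi = of_real t" by (auto elim: Reals_cases)
      have abst: "\<bar>t\<bar> = r ^ N" using normpi t by simp
      have lamn: "lam ^ n = of_real (r ^ N)" by (simp add: lam_def N_def power_mult)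
      show ?thesis
      proof (cases "t \<ge> 0")
        case True
        hence "t = r ^ N" using abst by simp
        thus ?thesis using that[of 1] t lamn by simp
      next
        case False
        hence "t = - (r ^ N)" using abst by simp
        thus ?thesis using that[of "-1"] t lamn by simp
      qed
    qed
    have lam0: "lam \<noteq> 0" using rpos by (simp add: lam_def)
    have Cn1: "C z (Suc n) \<noteq> 0" if Pz: "poly P z = 0" for z
    proof
      assume "C z (Suc n) = 0"
      hence "poly (of_int_poly (qz (Suc n))) z = 0" by (simp add: polyqz)
      from trans[OF Pz this Pz] qn1 degq[of "Suc n"] show False by simp
    qed
    have lamrel: "c (Suc n) * lam = of_int e * c (n - 1)"
    proof -
      have "c (Suc n) * lam ^ Suc n = pi * c (N - Suc n)" using recipc[of "Suc n"] N4 by (simp add: N_def)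
      also have "N - Suc n = n - 1" by (simp add: N_def)
      finally have "(c (Suc n) * lam) * lam ^ n = (of_int e * c (n - 1)) * lam ^ n" by (simp add: pie algebra_simps)
      thus ?thesis using lam0 by simp
    qed
    define G where "G i = qz i * (smult e (qz (n - 1))) ^ i * qz (Suc n) ^ (N - i) - qz 0 * qz (N - i) * qz (Suc n) ^ N" for i
    have polyG: "poly (of_int_poly (G i)) z = C z i * (of_int e * C z (n - 1)) ^ i * C z (Suc n) ^ (N - i) - C z 0 * C z (N - i) * C z (Suc n) ^ N" for i z
      by (simp add: G_def hom_distribs polyqz)
    have Gx0: "poly (of_int_poly (G i)) (x 0) = 0" if iN: "i \<le> N" for i
    proof -
      have "c i * (of_int e * c (n - 1)) ^ i * c (Suc n) ^ (N - i) = c i * lam ^ i * (c (Suc n) ^ i * c (Suc n) ^ (N - i))"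
        unfolding lamrel[symmetric] by (simp add: power_mult_distrib algebra_simps)
      also have "c (Suc n) ^ i * c (Suc n) ^ (N - i) = c (Suc n) ^ N" using iN by (simp flip: power_add)
      finally show ?thesis using recipc[OF iN] by (simp add: polyG c_def[symmetric] c0)
    qed
    have Gx1: "poly (of_int_poly (G i)) (x 1) = 0" if iN: "i \<le> N" for i
      using trans[OF Px0 Gx0[OF iN] Px1] by simp
    define d where "d = C (x 1)"
    define mu where "mu = of_int e * d (n - 1) / d (Suc n)"
    have dn1: "d (Suc n) \<noteq> 0" using Cn1[OF Px1] by (simp add: d_def)
    have murel: "d i * mu ^ i = d 0 * d (N - i)" if iN: "i \<le> N" for i
    proof -
      have eq: "d i * (of_int e * d (n - 1)) ^ i * d (Suc n) ^ (N - i) = d 0 * d (N - i) * d (Suc n) ^ N"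
        using Gx1[OF iN] by (simp add: polyG d_def)
      have "of_int e * d (n - 1) = mu * d (Suc n)" using dn1 by (simp add: mu_def)
      hence "d i * (of_int e * d (n - 1)) ^ i * d (Suc n) ^ (N - i) = (d i * mu ^ i) * (d (Suc n) ^ i * d (Suc n) ^ (N - i))"
        by (simp add: power_mult_distrib algebra_simps)
      also have "d (Suc n) ^ i * d (Suc n) ^ (N - i) = d (Suc n) ^ N" using iN by (simp flip: power_add)
      finally have fa: "d i * (of_int e * d (n - 1)) ^ i * d (Suc n) ^ (N - i) = (d i * mu ^ i) * d (Suc n) ^ N" .
      have "(d i * mu ^ i) * d (Suc n) ^ N = (d 0 * d (N - i)) * d (Suc n) ^ N" using fa eq by argo
      thus ?thesis using dn1 by simp
    qed
    have dN: "d N = 1" by (simp add: d_def C_top)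
    have d0x1: "x 1 * d 0 = 1" using C0[of "x 1"] Px1 by (simp add: d_def)
    have muN: "mu ^ N = d 0 * d 0" using murel[of N] dN by simp
    have nd0: "norm (d 0) * r = 1" using d0x1 by (metis norm_mult norm_one r_def mult.commute)
    have sN: "norm mu ^ N * r ^ 2 = 1"
    proof -
      have "norm mu ^ N = norm (d 0) * norm (d 0)" using muN by (metis norm_mult norm_power)
      hence "norm mu ^ N * r ^ 2 = (norm (d 0) * r) * (norm (d 0) * r)" by (simp add: power2_eq_square algebra_simps)
      thus ?thesis using nd0 by simp
    qed
    have x01: "x 0 \<noteq> x 1"
    proof
      assume "x 0 = x 1"
      hence "r * r ^ N = 1" using norm0 by (simp add: r_def mult.commute)
      hence "r ^ Suc N = 1" by simp
      hence "r = 1" using rpos by (intro real_pow_eq_1[of r "Suc N"]) auto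
      with rne show False by simp
    qed
    have Q1x0: "poly (QQ (x 1)) (x 0) = 0"
      using Px0 x01 unfolding factor[OF Px1] polylin by simp
    have Q1mu: "poly (QQ (x 1)) (mu / x 0) = 0"
    proof -
      have "poly (QQ (x 1)) (mu / x 0) = (\<Sum>i\<le>N. d i * mu ^ i / x 0 ^ i)"
        by (simp add: polyQQ d_def power_divide)
      also have "\<dots> = (\<Sum>i\<le>N. d 0 / x 0 ^ N * (d (N - i) * x 0 ^ (N - i)))"
      proof (intro sum.cong refl)
        fix i assume i: "i \<in> {..N}"
        hence "x 0 ^ N = x 0 ^ i * x 0 ^ (N - i)" by (simp flip: power_add)
        thus "d i * mu ^ i / x 0 ^ i = d 0 / x 0 ^ N * (d (N - i) * x 0 ^ (N - i))"
          using murel[of i] i x00 by (simp add: field_simps)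
      qed
      also have "\<dots> = d 0 / x 0 ^ N * (\<Sum>i\<le>N. d (N - i) * x 0 ^ (N - i))" by (simp add: sum_distrib_left)
      also have "(\<Sum>i\<le>N. d (N - i) * x 0 ^ (N - i)) = (\<Sum>i\<le>N. d i * x 0 ^ i)"
        by (rule sum.reindex_bij_witness[of _ "\<lambda>i. N - i" "\<lambda>i. N - i"]) auto
      also have "\<dots> = poly (QQ (x 1)) (x 0)" by (simp add: polyQQ d_def)
      also have "\<dots> = 0" using Q1x0 by simp
      finally show ?thesis by simp
    qed
    have Pmu: "poly P (mu / x 0) = 0" using Q1mu unfolding factor[OF Px1] polylin by simp
    have nmx: "norm (mu / x 0) * norm (x 0) = norm mu" using x00 by (simp add: norm_divide)
    from Pmu obtain j where j: "j \<le> N" "mu / x 0 = x j" using rootP by auto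
    have False
    proof (cases "j = 0")
      case True
      hence "norm (mu / x 0) = norm (x 0)" using j by simp
      hence "norm mu = norm (x 0) * norm (x 0)" using nmx by simp
      hence "norm mu * r ^ (2 * N) = (norm (x 0) * r ^ N) * (norm (x 0) * r ^ N)"
        by (simp add: power_mult algebra_simps power2_eq_square)
      hence "norm mu * r ^ (2 * N) = 1" using norm0 by simp
      moreover have "N * (2 * N) \<noteq> 2"
      proof -
        have "4 * (2 * 4) \<le> N * (2 * N)" using N4 by (intro mult_le_mono) auto
        thus ?thesis by linarith
      qed
      ultimately have "r = 1" using modulus_arith[of r "norm mu" N "2 * N"] rpos sN by simp
      with rne show False by simp
    next
      case False
      hence "norm (mu / x 0) = r" using j normx by auto
      hence nm: "norm mu = r * norm (x 0)" using nmx by simp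
      have "N = Suc (N - 1)" using N4 by simp
      hence rN: "r ^ N = r ^ (N - 1) * r" by (metis power_Suc2)
      have "(norm mu * r ^ (N - 1)) * r = r * (norm (x 0) * r ^ N)" using nm rN by (simp add: algebra_simps)
      hence "(norm mu * r ^ (N - 1)) * r = 1 * r" using norm0 by simp
      hence "norm mu * r ^ (N - 1) = 1" using rpos by (metis mult_right_cancel less_irrefl)
      moreover have "N * (N - 1) \<noteq> 2"
      proof -
        have "4 * 3 \<le> N * (N - 1)" using N4 by (intro mult_le_mono) auto
        thus ?thesis by linarith
      qed
      ultimately have "r = 1" using modulus_arith[of r "norm mu" N "N - 1"] rpos sN by simp
      with rne show False by simp
    qed
    thus ?thesis ..
  qed
qed

end
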